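(* Let $S$ be a nonabelian finite simple group, $I$ a set, and $G=S^I$ (the Cartesian product). Then every finite quotient of $G$ by an abstract normal subgroup of finite index is semisimple, i.e. is a direct product of finitely many nonabelian finite simple groups. *)

theory Defs
  imports "HOL-Algebra.Algebra"
begin

end

theory Submission
  imports Defs
begin



definition comm_set :: "('a,'b) monoid_scheme \<Rightarrow> 'a \<Rightarrow> 'a set" where
  "comm_set G g = {h \<otimes>\<^bsub>G\<^esub> g \<otimes>\<^bsub>G\<^esub> inv\<^bsub>G\<^esub> h \<otimes>\<^bsub>G\<^esub> inv\<^bsub>G\<^esub> g | h. h \<in> carrier G}"

fun cp :: "('a,'b) monoid_scheme \<Rightarrow> 'a \<Rightarrow> nat \<Rightarrow> 'a set" where
  "cp G g 0 = {\<one>\<^bsub>G\<^esub>}"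
| "cp G g (Suc k) = {c \<otimes>\<^bsub>G\<^esub> b | c b. c \<in> comm_set G g \<and> b \<in> cp G g k}"

context group begin

lemma cancel1: "x \<in> carrier G \<Longrightarrow> y \<in> carrier G \<Longrightarrow> x \<otimes> (inv x \<otimes> y) = y"
  by (simp add: m_assoc[symmetric])
lemma cancel2: "x \<in> carrier G \<Longrightarrow> y \<in> carrier G \<Longrightarrow> inv x \<otimes> (x \<otimes> y) = y"
  by (simp add: m_assoc[symmetric])

lemma comm_set_carrier: "g \<in> carrier G \<Longrightarrow> comm_set G g \<subseteq> carrier G"
  unfolding comm_set_def by auto

lemma one_comm_set: "g \<in> carrier G \<Longrightarrow> \<one> \<in> comm_set G g"
  unfolding comm_set_def by (rule CollectI, rule exI[of _ \<one>]) simp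

lemma cp_carrier: "g \<in> carrier G \<Longrightarrow> cp G g k \<subseteq> carrier G"
  by (induction k) (use comm_set_carrier in auto)

lemma cp_Suc_mono: "g \<in> carrier G \<Longrightarrow> cp G g k \<subseteq> cp G g (Suc k)"
proof
  fix a assume g: "g \<in> carrier G" and a: "a \<in> cp G g k"
  have "a = \<one> \<otimes> a" using a cp_carrier[OF g] by (metis l_one subsetD)
  then show "a \<in> cp G g (Suc k)" using a one_comm_set[OF g] by auto
qed

lemma cp_mono: assumes "g \<in> carrier G" "k \<le> m" shows "cp G g k \<subseteq> cp G g m"
  using assms(2)
proof (induction rule: dec_induct)
  case (step n)
  then show ?case using cp_Suc_mono[OF assms(1), of n] by blast
qed simp

lemma cp_mult: "g \<in> carrier G \<Longrightarrow> a \<in> cp G g k \<Longrightarrow> b \<in> cp G g m \<Longrightarrow> a \<otimes> b \<in> cp G g (k + m)"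
proof (induction k arbitrary: a)
  case 0
  then show ?case using cp_carrier[of g m] by auto
next
  case (Suc k)
  then obtain c d where c: "c \<in> comm_set G g" "d \<in> cp G g k" "a = c \<otimes> d" by auto
  then have "d \<otimes> b \<in> cp G g (k+m)" using Suc by auto
  moreover have "a \<otimes> b = c \<otimes> (d \<otimes> b)"
    using c(3) c(1,2) Suc.prems(1,3) cp_carrier[OF Suc.prems(1)] comm_set_carrier[OF Suc.prems(1)]
    by (metis m_assoc subsetD)
  ultimately show ?case using c by auto
qed

lemma cp_one: "cp G \<one> k = {\<one>}"
proof (induction k)
  case (Suc k)
  have "comm_set G \<one> = {\<one>}" unfolding comm_set_def by (auto intro!: exI[of _ \<one>])
  then show ?case using Suc by auto
qed simp

definition UU where "UU g = (\<Union>k. cp G g k)"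

lemma UU_mult: "g \<in> carrier G \<Longrightarrow> a \<in> UU g \<Longrightarrow> b \<in> UU g \<Longrightarrow> a \<otimes> b \<in> UU g"
  unfolding UU_def using cp_mult by blast

lemma UU_one: "g \<in> carrier G \<Longrightarrow> \<one> \<in> UU g"
  unfolding UU_def by (auto intro: exI[of _ 0])

lemma UU_carrier: "g \<in> carrier G \<Longrightarrow> UU g \<subseteq> carrier G"
  unfolding UU_def using cp_carrier by blast

lemma UU_pow: "g \<in> carrier G \<Longrightarrow> a \<in> UU g \<Longrightarrow> a [^] (n::nat) \<in> UU g"
  by (induction n) (auto simp: UU_one UU_mult)

lemma UU_inv: assumes fin: "finite (carrier G)" and g: "g \<in> carrier G" and a: "a \<in> UU g"
  shows "inv a \<in> UU g"
proof -
  have ac: "a \<in> carrier G" using a UU_carrier g by auto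
  have o: "ord a \<ge> 1" using ord_ge_1[OF fin ac] .
  have "a [^] (ord a - 1) \<otimes> a = a [^] ord a"
    using o ac by (metis Suc_diff_le diff_Suc_1 nat_pow_Suc)
  also have "\<dots> = \<one>" using ac by simp
  finally have "inv a = a [^] (ord a - 1)"
    using ac by (metis inv_equality nat_pow_closed)
  then show ?thesis using UU_pow[OF g a] by simp
qed

lemma UU_subgroup: "finite (carrier G) \<Longrightarrow> g \<in> carrier G \<Longrightarrow> subgroup (UU g) G"
  by (rule subgroupI) (use UU_carrier UU_one UU_inv UU_mult in blast)+

lemma comm_conj: assumes x: "x \<in> carrier G" and h: "h \<in> carrier G" and g: "g \<in> carrier G"
  shows "x \<otimes> (h \<otimes> g \<otimes> inv h \<otimes> inv g) \<otimes> inv x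
     = ((x \<otimes> h) \<otimes> g \<otimes> inv (x \<otimes> h) \<otimes> inv g) \<otimes> inv (x \<otimes> g \<otimes> inv x \<otimes> inv g)"
  using x h g by (simp add: inv_mult_group m_assoc cancel1 cancel2)

lemma UU_conj: assumes fin: "finite (carrier G)" and g: "g \<in> carrier G" and x: "x \<in> carrier G"
  shows "a \<in> cp G g k \<Longrightarrow> x \<otimes> a \<otimes> inv x \<in> UU g"
proof (induction k arbitrary: a)
  case 0
  then show ?case using x UU_one[OF g] by simp
next
  case (Suc k)
  then obtain c d where c: "c \<in> comm_set G g" "d \<in> cp G g k" "a = c \<otimes> d" by auto
  obtain h where h: "h \<in> carrier G" "c = h \<otimes> g \<otimes> inv h \<otimes> inv g" using c(1) unfolding comm_set_def by auto
  have dc: "d \<in> carrier G" using c(2) cp_carrier g by auto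
  have e1: "x \<otimes> a \<otimes> inv x = (x \<otimes> c \<otimes> inv x) \<otimes> (x \<otimes> d \<otimes> inv x)"
    using c h dc x g by (simp add: m_assoc cancel1 cancel2)
  have "(x \<otimes> h) \<otimes> g \<otimes> inv (x \<otimes> h) \<otimes> inv g \<in> comm_set G g"
    unfolding comm_set_def using x h by auto
  then have A: "(x \<otimes> h) \<otimes> g \<otimes> inv (x \<otimes> h) \<otimes> inv g \<in> UU g"
    unfolding UU_def using one_comm_set[OF g] comm_set_carrier[OF g]
    by (auto intro!: exI[of _ "Suc 0"]) (metis r_one subsetD)
  have "x \<otimes> g \<otimes> inv x \<otimes> inv g \<in> comm_set G g"
    unfolding comm_set_def using x by auto
  then have "x \<otimes> g \<otimes> inv x \<otimes> inv g \<in> UU g"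
    unfolding UU_def using comm_set_carrier[OF g]
    by (auto intro!: exI[of _ "Suc 0"]) (metis r_one subsetD)
  then have B: "inv (x \<otimes> g \<otimes> inv x \<otimes> inv g) \<in> UU g" using UU_inv fin g by auto
  have "x \<otimes> c \<otimes> inv x \<in> UU g"
    using comm_conj[OF x h(1) g] h(2) UU_mult[OF g A B] by (simp add: m_assoc)
  then show ?case using e1 Suc.IH[OF c(2)] UU_mult g by auto
qed

lemma UU_normal: "finite (carrier G) \<Longrightarrow> g \<in> carrier G \<Longrightarrow> UU g \<lhd> G"
  unfolding normal_inv_iff using UU_subgroup UU_conj unfolding UU_def by blast

end

context simple_group begin

lemma comm_of_one: assumes "h \<in> carrier G" "g \<in> carrier G" "h \<otimes> g \<otimes> inv h \<otimes> inv g = \<one>"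
  shows "h \<otimes> g = g \<otimes> h"
proof -
  have "h \<otimes> g \<otimes> inv h \<otimes> inv g \<otimes> (g \<otimes> h) = h \<otimes> g"
    using assms(1,2) by (simp add: m_assoc cancel1 cancel2)
  then show ?thesis using assms by simp
qed

lemma UU_full:
  assumes fin: "finite (carrier G)" and nc: "\<not> comm_group G" and g: "g \<in> carrier G" "g \<noteq> \<one>"
  shows "UU g = carrier G"
proof (rule ccontr)
  assume "UU g \<noteq> carrier G"
  then have U1: "UU g = {\<one>}" using no_real_normal_subgroup UU_normal[OF fin g(1)] by blast
  have gc: "\<forall>h\<in>carrier G. h \<otimes> g = g \<otimes> h"
  proof
    fix h assume h: "h \<in> carrier G"
    have c: "h \<otimes> g \<otimes> inv h \<otimes> inv g \<in> comm_set G g"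
      unfolding comm_set_def using h by blast
    then have "(h \<otimes> g \<otimes> inv h \<otimes> inv g) \<otimes> \<one> \<in> cp G g (Suc 0)"
      unfolding cp.simps by blast
    moreover have "(h \<otimes> g \<otimes> inv h \<otimes> inv g) \<otimes> \<one> = h \<otimes> g \<otimes> inv h \<otimes> inv g"
      using h g by (intro r_one) simp
    ultimately have "h \<otimes> g \<otimes> inv h \<otimes> inv g \<in> cp G g (Suc 0)" by (simp only:)
    then have "h \<otimes> g \<otimes> inv h \<otimes> inv g \<in> UU g" unfolding UU_def by blast
    then show "h \<otimes> g = g \<otimes> h" using U1 comm_of_one h g by blast
  qed
  define Z where "Z = {z \<in> carrier G. \<forall>h\<in>carrier G. h \<otimes> z = z \<otimes> h}"
  have Zinv: "inv z \<in> Z" if "z \<in> Z" for z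
  proof -
    have zc: "z \<in> carrier G" using that unfolding Z_def by blast
    have "h \<otimes> inv z = inv z \<otimes> h" if h: "h \<in> carrier G" for h
    proof -
      have "\<forall>h\<in>carrier G. h \<otimes> z = z \<otimes> h" using \<open>z \<in> Z\<close> unfolding Z_def by blast
      then have e: "z \<otimes> h = h \<otimes> z" using h by (metis (no_types))
      have "h \<otimes> inv z = inv z \<otimes> (z \<otimes> h) \<otimes> inv z" using zc h by (simp add: m_assoc cancel2)
      also have "\<dots> = inv z \<otimes> (h \<otimes> z) \<otimes> inv z" by (simp only: e)
      also have "\<dots> = inv z \<otimes> h" using zc h by (simp add: m_assoc)
      finally show ?thesis .
    qed
    then show ?thesis using zc unfolding Z_def by blast
  qed
  have Zmult: "a \<otimes> b \<in> Z" if ab: "a \<in> Z" "b \<in> Z" for a b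
  proof -
    have ac: "a \<in> carrier G" "b \<in> carrier G" using ab unfolding Z_def by blast+
    have "h \<otimes> (a \<otimes> b) = (a \<otimes> b) \<otimes> h" if h: "h \<in> carrier G" for h
    proof -
      have e1: "h \<otimes> a = a \<otimes> h" and e2: "h \<otimes> b = b \<otimes> h" using ab h unfolding Z_def by blast+
      have "h \<otimes> (a \<otimes> b) = (h \<otimes> a) \<otimes> b" using ac h by (simp add: m_assoc)
      also have "\<dots> = a \<otimes> (h \<otimes> b)" using ac h by (simp only: e1 m_assoc)
      also have "\<dots> = (a \<otimes> b) \<otimes> h" using ac h by (simp only: e2 m_assoc)
      finally show ?thesis .
    qed
    then show ?thesis using ac m_closed unfolding Z_def by blast
  qed
  have Zsub: "subgroup Z G"
  proof (rule subgroupI)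
    show "Z \<subseteq> carrier G" unfolding Z_def by blast
    show "Z \<noteq> {}" using gc g unfolding Z_def by blast
  qed (use Zinv Zmult in blast)+
  have "Z \<lhd> G" unfolding normal_inv_iff
  proof (intro conjI Zsub ballI)
    fix x z assume x: "x \<in> carrier G" and z: "z \<in> Z"
    have e: "x \<otimes> z = z \<otimes> x" and zc: "z \<in> carrier G" using x z unfolding Z_def by blast+
    have "x \<otimes> z \<otimes> inv x = z \<otimes> x \<otimes> inv x" by (simp only: e)
    then have "x \<otimes> z \<otimes> inv x = z" using x zc by (simp add: m_assoc)
    then show "x \<otimes> z \<otimes> inv x \<in> Z" using z by simp
  qed
  moreover have "g \<in> Z" unfolding Z_def using gc g(1) by blast
  ultimately have "Z = carrier G" using no_real_normal_subgroup g(2) by blast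
  then have "comm_group G"
    by (intro group_comm_groupI) (metis (mono_tags, lifting) Z_def mem_Collect_eq)
  then show False using nc by simp
qed

lemma uniform_K:
  assumes fin: "finite (carrier G)" and nc: "\<not> comm_group G"
  shows "\<exists>K. \<forall>g\<in>carrier G. g \<noteq> \<one> \<longrightarrow> cp G g K = carrier G"
proof -
  define A where "A = {p \<in> carrier G \<times> carrier G. fst p \<noteq> \<one>}"
  have "\<forall>p\<in>A. \<exists>k. snd p \<in> cp G (fst p) k"
    using UU_full[OF fin nc] unfolding A_def UU_def by auto
  then have "\<exists>f. \<forall>p\<in>A. snd p \<in> cp G (fst p) (f p)" by (rule bchoice)
  then obtain f where f: "\<forall>p\<in>A. snd p \<in> cp G (fst p) (f p)" by blast
  have finA: "finite A" using fin unfolding A_def by auto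
  define K where "K = Max (insert 0 (f ` A))"
  have fK: "f p \<le> K" if "p \<in> A" for p using finA that unfolding K_def by (simp add: Max_ge_iff)
  show ?thesis
  proof (intro exI ballI impI)
    fix g assume g: "g \<in> carrier G" "g \<noteq> \<one>"
    show "cp G g K = carrier G"
    proof
      show "cp G g K \<subseteq> carrier G" using cp_carrier g by auto
      show "carrier G \<subseteq> cp G g K"
      proof
        fix s assume s: "s \<in> carrier G"
        have p: "(g, s) \<in> A" using g s A_def by auto
        have "s \<in> cp G g (f (g, s))" using f p by fastforce
        then show "s \<in> cp G g K" using fK[OF p] cp_mono[OF g(1)] by blast
      qed
    qed
  qed
qed

end



locale msetup =
  fixes S :: "('a, 'b) monoid_scheme" and I :: "'i set" and N :: "('i \<Rightarrow> 'a) set"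
  assumes simple: "simple_group S" and finS: "finite (carrier S)" and nc: "\<not> comm_group S"
    and nor: "N \<lhd> product_group I (\<lambda>_. S)"
begin

abbreviation "G \<equiv> product_group I (\<lambda>_. S)"

lemma grpS: "group S" using simple simple_group_def by blast
lemma grpG: "group G" using grpS by simp
lemma subN: "subgroup N G" using nor normal_imp_subgroup by blast

definition K where "K = (SOME K. \<forall>g\<in>carrier S. g \<noteq> \<one>\<^bsub>S\<^esub> \<longrightarrow> cp S g K = carrier S)"

lemma K_prop: "g \<in> carrier S \<Longrightarrow> g \<noteq> \<one>\<^bsub>S\<^esub> \<Longrightarrow> cp S g K = carrier S"
  using someI_ex[OF simple_group.uniform_K[OF simple finS nc]] unfolding K_def by blast

lemma cpN: "x \<in> N \<Longrightarrow> y \<in> carrier G \<Longrightarrow> (\<forall>i\<in>I. y i \<in> cp S (x i) k) \<Longrightarrow> y \<in> N"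
proof (induction k arbitrary: y)
  case 0
  then have "y = \<one>\<^bsub>G\<^esub>" by (intro PiE_ext[of y I "\<lambda>_. carrier S"]) (auto simp: grpS group.is_monoid)
  then show ?case using subgroup.one_closed[OF subN] by metis
next
  case (Suc k)
  have xc: "x \<in> carrier G" using subgroup.mem_carrier[OF subN Suc.prems(1)] .
  have xi: "x i \<in> carrier S" if "i \<in> I" for i using xc that by auto
  have "\<forall>i\<in>I. \<exists>h b. h \<in> carrier S \<and> b \<in> cp S (x i) k \<and>
      y i = (h \<otimes>\<^bsub>S\<^esub> x i \<otimes>\<^bsub>S\<^esub> inv\<^bsub>S\<^esub> h \<otimes>\<^bsub>S\<^esub> inv\<^bsub>S\<^esub> x i) \<otimes>\<^bsub>S\<^esub> b"
  proof
    fix i assume i: "i \<in> I"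
    have "y i \<in> cp S (x i) (Suc k)" using Suc.prems(3) i by blast
    then obtain c b where cb: "c \<in> comm_set S (x i)" "b \<in> cp S (x i) k" "y i = c \<otimes>\<^bsub>S\<^esub> b"
      by auto
    from cb(1) obtain h where h: "h \<in> carrier S" "c = h \<otimes>\<^bsub>S\<^esub> x i \<otimes>\<^bsub>S\<^esub> inv\<^bsub>S\<^esub> h \<otimes>\<^bsub>S\<^esub> inv\<^bsub>S\<^esub> x i"
      unfolding comm_set_def by blast
    show "\<exists>h b. h \<in> carrier S \<and> b \<in> cp S (x i) k \<and>
      y i = (h \<otimes>\<^bsub>S\<^esub> x i \<otimes>\<^bsub>S\<^esub> inv\<^bsub>S\<^esub> h \<otimes>\<^bsub>S\<^esub> inv\<^bsub>S\<^esub> x i) \<otimes>\<^bsub>S\<^esub> b"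
      using h cb(2,3) by blast
  qed
  then have "\<exists>H. \<forall>i\<in>I. \<exists>b. H i \<in> carrier S \<and> b \<in> cp S (x i) k \<and>
      y i = (H i \<otimes>\<^bsub>S\<^esub> x i \<otimes>\<^bsub>S\<^esub> inv\<^bsub>S\<^esub> H i \<otimes>\<^bsub>S\<^esub> inv\<^bsub>S\<^esub> x i) \<otimes>\<^bsub>S\<^esub> b"
    by (rule bchoice)
  then obtain H where "\<forall>i\<in>I. \<exists>b. H i \<in> carrier S \<and> b \<in> cp S (x i) k \<and>
      y i = (H i \<otimes>\<^bsub>S\<^esub> x i \<otimes>\<^bsub>S\<^esub> inv\<^bsub>S\<^esub> H i \<otimes>\<^bsub>S\<^esub> inv\<^bsub>S\<^esub> x i) \<otimes>\<^bsub>S\<^esub> b"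
    by blast
  then have "\<exists>B. \<forall>i\<in>I. H i \<in> carrier S \<and> B i \<in> cp S (x i) k \<and>
      y i = (H i \<otimes>\<^bsub>S\<^esub> x i \<otimes>\<^bsub>S\<^esub> inv\<^bsub>S\<^esub> H i \<otimes>\<^bsub>S\<^esub> inv\<^bsub>S\<^esub> x i) \<otimes>\<^bsub>S\<^esub> B i"
    by (rule bchoice)
  then obtain B where HB: "\<forall>i\<in>I. H i \<in> carrier S \<and> B i \<in> cp S (x i) k \<and>
      y i = (H i \<otimes>\<^bsub>S\<^esub> x i \<otimes>\<^bsub>S\<^esub> inv\<^bsub>S\<^esub> H i \<otimes>\<^bsub>S\<^esub> inv\<^bsub>S\<^esub> x i) \<otimes>\<^bsub>S\<^esub> B i"
    by blast
  define hh where "hh = restrict H I"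
  define bb where "bb = restrict B I"
  have Bc: "B i \<in> carrier S" if "i \<in> I" for i
    using HB that group.cp_carrier[OF grpS xi[OF that]] by blast
  have hhc: "hh \<in> carrier G" unfolding hh_def using HB by auto
  have bbc: "bb \<in> carrier G" unfolding bb_def using Bc by auto
  have "\<forall>i\<in>I. bb i \<in> cp S (x i) k" using HB unfolding bb_def by simp
  then have bbN: "bb \<in> N" by (rule Suc.IH[OF Suc.prems(1) bbc])
  have c1: "hh \<otimes>\<^bsub>G\<^esub> x \<otimes>\<^bsub>G\<^esub> inv\<^bsub>G\<^esub> hh \<in> N"
    using normal.inv_op_closed2[OF nor hhc Suc.prems(1)] .
  have c2: "inv\<^bsub>G\<^esub> x \<in> N" using subgroup.m_inv_closed[OF subN Suc.prems(1)] .
  have cN: "hh \<otimes>\<^bsub>G\<^esub> x \<otimes>\<^bsub>G\<^esub> inv\<^bsub>G\<^esub> hh \<otimes>\<^bsub>G\<^esub> inv\<^bsub>G\<^esub> x \<otimes>\<^bsub>G\<^esub> bb \<in> N"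
    using subgroup.m_closed[OF subN subgroup.m_closed[OF subN c1 c2] bbN] .
  have "y = hh \<otimes>\<^bsub>G\<^esub> x \<otimes>\<^bsub>G\<^esub> inv\<^bsub>G\<^esub> hh \<otimes>\<^bsub>G\<^esub> inv\<^bsub>G\<^esub> x \<otimes>\<^bsub>G\<^esub> bb"
  proof (rule PiE_ext[of y I "\<lambda>_. carrier S"])
    show "y \<in> (\<Pi>\<^sub>E i\<in>I. carrier S)" using Suc.prems(2) by simp
    have "hh \<otimes>\<^bsub>G\<^esub> x \<otimes>\<^bsub>G\<^esub> inv\<^bsub>G\<^esub> hh \<otimes>\<^bsub>G\<^esub> inv\<^bsub>G\<^esub> x \<otimes>\<^bsub>G\<^esub> bb \<in> carrier G"
      by (intro monoid.m_closed[OF group.is_monoid[OF grpG]] group.inv_closed[OF grpG] hhc xc bbc)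
    then show "hh \<otimes>\<^bsub>G\<^esub> x \<otimes>\<^bsub>G\<^esub> inv\<^bsub>G\<^esub> hh \<otimes>\<^bsub>G\<^esub> inv\<^bsub>G\<^esub> x \<otimes>\<^bsub>G\<^esub> bb \<in> (\<Pi>\<^sub>E i\<in>I. carrier S)"
      by (simp only: carrier_product_group)
    fix i assume i: "i \<in> I"
    have ih: "inv\<^bsub>G\<^esub> hh = (\<lambda>i\<in>I. inv\<^bsub>S\<^esub> (hh i))"
      by (rule inv_product_group) (use hhc grpS in auto)
    have ix: "inv\<^bsub>G\<^esub> x = (\<lambda>i\<in>I. inv\<^bsub>S\<^esub> (x i))"
      by (rule inv_product_group) (use xc grpS in auto)
    have hi: "hh i = H i" "bb i = B i" using i unfolding hh_def bb_def by auto
    have "(hh \<otimes>\<^bsub>G\<^esub> x \<otimes>\<^bsub>G\<^esub> inv\<^bsub>G\<^esub> hh \<otimes>\<^bsub>G\<^esub> inv\<^bsub>G\<^esub> x \<otimes>\<^bsub>G\<^esub> bb) i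
       = (H i \<otimes>\<^bsub>S\<^esub> x i \<otimes>\<^bsub>S\<^esub> inv\<^bsub>S\<^esub> H i \<otimes>\<^bsub>S\<^esub> inv\<^bsub>S\<^esub> x i) \<otimes>\<^bsub>S\<^esub> B i"
      using i by (simp add: ih ix hi)
    then show "y i = (hh \<otimes>\<^bsub>G\<^esub> x \<otimes>\<^bsub>G\<^esub> inv\<^bsub>G\<^esub> hh \<otimes>\<^bsub>G\<^esub> inv\<^bsub>G\<^esub> x \<otimes>\<^bsub>G\<^esub> bb) i"
      using HB i by simp
  qed
  then show ?case using cN by (simp only:)
qed

lemma lemA: assumes x: "x \<in> N" and y: "y \<in> carrier G"
  and sub: "\<And>i. i \<in> I \<Longrightarrow> x i = \<one>\<^bsub>S\<^esub> \<Longrightarrow> y i = \<one>\<^bsub>S\<^esub>"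
  shows "y \<in> N"
proof (rule cpN[OF x y, of K], intro ballI)
  fix i assume i: "i \<in> I"
  have xc: "x \<in> carrier G" using subgroup.mem_carrier[OF subN x] .
  show "y i \<in> cp S (x i) K"
  proof (cases "x i = \<one>\<^bsub>S\<^esub>")
    case True
    then show ?thesis using sub[OF i] group.cp_one[OF grpS] by simp
  next
    case False
    then show ?thesis using K_prop[of "x i"] xc y i by auto
  qed
qed

end



context msetup begin

lemma oneS: "\<one>\<^bsub>S\<^esub> \<in> carrier S" using monoid.one_closed[OF group.is_monoid[OF grpS]] .
lemma inv_oneS: "inv\<^bsub>S\<^esub> \<one>\<^bsub>S\<^esub> = \<one>\<^bsub>S\<^esub>" using monoid.inv_one[OF group.is_monoid[OF grpS]] .
lemma r_oneS: "x \<in> carrier S \<Longrightarrow> x \<otimes>\<^bsub>S\<^esub> \<one>\<^bsub>S\<^esub> = x" using monoid.r_one[OF group.is_monoid[OF grpS]] .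
lemma l_oneS: "x \<in> carrier S \<Longrightarrow> \<one>\<^bsub>S\<^esub> \<otimes>\<^bsub>S\<^esub> x = x" using monoid.l_one[OF group.is_monoid[OF grpS]] .

definition g0 where "g0 = (SOME g. g \<in> carrier S \<and> g \<noteq> \<one>\<^bsub>S\<^esub>)"

lemma g0: "g0 \<in> carrier S" "g0 \<noteq> \<one>\<^bsub>S\<^esub>"
proof -
  have "\<exists>g. g \<in> carrier S \<and> g \<noteq> \<one>\<^bsub>S\<^esub>"
    using simple_group.simple_not_triv[OF simple] oneS by blast
  then show "g0 \<in> carrier S" "g0 \<noteq> \<one>\<^bsub>S\<^esub>" unfolding g0_def by (metis (mono_tags, lifting) someI_ex)+
qed

definition e where "e J = (\<lambda>i\<in>I. if i \<in> J then g0 else \<one>\<^bsub>S\<^esub>)"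
definition small where "small J \<longleftrightarrow> e J \<in> N"

lemma e_carrier: "e J \<in> carrier G"
  using g0 oneS unfolding e_def by auto

lemma e_app: "i \<in> I \<Longrightarrow> e J i = (if i \<in> J then g0 else \<one>\<^bsub>S\<^esub>)"
  unfolding e_def by simp

lemma supp_small: assumes x: "x \<in> carrier G" shows "x \<in> N \<longleftrightarrow> small {i\<in>I. x i \<noteq> \<one>\<^bsub>S\<^esub>}"
proof
  assume "x \<in> N"
  then show "small {i\<in>I. x i \<noteq> \<one>\<^bsub>S\<^esub>}" unfolding small_def
    by (rule lemA[OF _ e_carrier]) (simp add: e_app)
next
  assume "small {i\<in>I. x i \<noteq> \<one>\<^bsub>S\<^esub>}"
  then show "x \<in> N" unfolding small_def
    by (rule lemA[OF _ x]) (use g0 in \<open>auto simp: e_app split: if_splits\<close>)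
qed

lemma small_mono: assumes "small B" "A \<inter> I \<subseteq> B" shows "small A"
  using assms(1) unfolding small_def
  by (rule lemA[OF _ e_carrier]) (use g0 assms(2) in \<open>auto simp: e_app split: if_splits\<close>)

lemma small_empty: "small {}"
proof -
  have "e {} = \<one>\<^bsub>G\<^esub>" unfolding e_def by simp
  then show ?thesis unfolding small_def using subgroup.one_closed[OF subN] by (simp only:)
qed

lemma small_Un: assumes A: "small A" and B: "small B" shows "small (A \<union> B)"
proof -
  have B': "small (B - A)" using small_mono[OF B] by blast
  define z where "z = e A \<otimes>\<^bsub>G\<^esub> e (B - A)"
  have zN: "z \<in> N" unfolding z_def using A B' unfolding small_def by (rule subgroup.m_closed[OF subN])
  have zc: "z \<in> carrier G" using subgroup.mem_carrier[OF subN zN] .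
  have "small {i\<in>I. z i \<noteq> \<one>\<^bsub>S\<^esub>}" using supp_small[OF zc] zN by blast
  moreover have "(A \<union> B) \<inter> I \<subseteq> {i\<in>I. z i \<noteq> \<one>\<^bsub>S\<^esub>}"
    using g0 oneS by (auto simp: z_def e_app r_oneS l_oneS)
  ultimately show ?thesis by (rule small_mono)
qed

lemma small_Union: "finite F \<Longrightarrow> (\<forall>A\<in>F. small A) \<Longrightarrow> small (\<Union>F)"
  by (induction F rule: finite_induct) (auto simp: small_empty small_Un)

lemma small_UN: "finite Y \<Longrightarrow> (\<And>y. y \<in> Y \<Longrightarrow> small (ff y)) \<Longrightarrow> small (\<Union> (ff ` Y))"
  using small_Union[of "ff ` Y"] by auto

definition fam :: "nat \<Rightarrow> (nat \<Rightarrow> 'i set) \<Rightarrow> bool" where "fam n A \<longleftrightarrow> (\<forall>k<n. A k \<subseteq> I \<and> \<not> small (A k)) \<and>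
    (\<forall>j<n. \<forall>k<n. j \<noteq> k \<longrightarrow> A j \<inter> A k = {})"

lemma fam_bound: assumes fam: "fam n A" and finQ: "finite (carrier (G Mod N))"
  shows "n \<le> card (carrier (G Mod N))"
proof -
  define f where "f k = N #>\<^bsub>G\<^esub> e (A k)" for k
  have "inj_on f {..<n}"
  proof (rule inj_onI, rule ccontr)
    fix j k assume j: "j \<in> {..<n}" and k: "k \<in> {..<n}" and fe: "f j = f k" and ne: "j \<noteq> k"
    have "e (A j) \<in> N #>\<^bsub>G\<^esub> e (A j)" by (rule group.rcos_self[OF grpG e_carrier subN])
    then have "e (A j) \<in> N #>\<^bsub>G\<^esub> e (A k)" using fe unfolding f_def by simp
    then have wN: "e (A j) \<otimes>\<^bsub>G\<^esub> inv\<^bsub>G\<^esub> e (A k) \<in> N"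
      by (rule subgroup.rcos_module_imp[OF subN grpG e_carrier])
    have wc: "e (A j) \<otimes>\<^bsub>G\<^esub> inv\<^bsub>G\<^esub> e (A k) \<in> carrier G"
      using subgroup.mem_carrier[OF subN wN] .
    have ih: "inv\<^bsub>G\<^esub> e (A k) = (\<lambda>i\<in>I. inv\<^bsub>S\<^esub> (e (A k) i))"
      by (rule inv_product_group) (use e_carrier grpS in auto)
    have "A j \<inter> I \<subseteq> {i\<in>I. (e (A j) \<otimes>\<^bsub>G\<^esub> inv\<^bsub>G\<^esub> e (A k)) i \<noteq> \<one>\<^bsub>S\<^esub>}"
    proof
      fix i assume i: "i \<in> A j \<inter> I"
      then have "i \<notin> A k" using fam j k ne unfolding fam_def by blast
      then have "(e (A j) \<otimes>\<^bsub>G\<^esub> inv\<^bsub>G\<^esub> e (A k)) i = g0"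
        using i g0 by (simp add: ih e_app inv_oneS r_oneS)
      then show "i \<in> {i\<in>I. (e (A j) \<otimes>\<^bsub>G\<^esub> inv\<^bsub>G\<^esub> e (A k)) i \<noteq> \<one>\<^bsub>S\<^esub>}" using i g0 by simp
    qed
    then have "small (A j)" using supp_small[OF wc] wN small_mono by blast
    then show False using fam j unfolding fam_def by blast
  qed
  moreover have "f ` {..<n} \<subseteq> carrier (G Mod N)"
    unfolding f_def carrier_FactGroup using e_carrier by blast
  ultimately show ?thesis using card_inj_on_le[OF _ _ finQ] by fastforce
qed

end

locale msetup2 = msetup +
  assumes finQ: "finite (carrier (product_group I (\<lambda>_. S) Mod N))"
begin

definition nmax where "nmax = (GREATEST n. \<exists>A. fam n A)"

lemma fam0: "fam 0 (\<lambda>_. {})" unfolding fam_def by simp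

lemma nmax_ex: "\<exists>A. fam nmax A"
  unfolding nmax_def
proof (rule GreatestI_nat[where k=0 and b="card (carrier (G Mod N))"])
  show "\<exists>A. fam 0 A" using fam0 by blast
  fix y assume "\<exists>A. fam y A" then show "y \<le> card (carrier (G Mod N))" using fam_bound finQ by blast
qed

lemma nmax_ge: assumes "fam n A" shows "n \<le> nmax"
  unfolding nmax_def
proof (rule Greatest_le_nat[where b="card (carrier (G Mod N))"])
  show "\<exists>A. fam n A" using assms by blast
  fix y assume "\<exists>A. fam y A" then show "y \<le> card (carrier (G Mod N))" using fam_bound finQ by blast
qed

definition AA where "AA = (SOME A. fam nmax A)"

lemma famAA: "fam nmax AA" unfolding AA_def using nmax_ex by (rule someI_ex)

lemma AA_sub: "k < nmax \<Longrightarrow> AA k \<subseteq> I" using famAA unfolding fam_def by blast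
lemma AA_ns: "k < nmax \<Longrightarrow> \<not> small (AA k)" using famAA unfolding fam_def by blast
lemma AA_disj: "j < nmax \<Longrightarrow> k < nmax \<Longrightarrow> j \<noteq> k \<Longrightarrow> AA j \<inter> AA k = {}"
  using famAA unfolding fam_def by blast

lemma rest_small: "small (I - \<Union> (AA ` {..<nmax}))"
proof (rule ccontr)
  assume ns: "\<not> small (I - \<Union> (AA ` {..<nmax}))"
  have "fam (Suc nmax) (AA(nmax := I - \<Union> (AA ` {..<nmax})))"
    unfolding fam_def using AA_sub AA_ns AA_disj ns by auto
  then show False using nmax_ge by fastforce
qed

lemma atom: assumes k: "k < nmax" and B: "B \<subseteq> AA k" shows "small B \<or> small (AA k - B)"
proof (rule ccontr)
  assume ns: "\<not> (small B \<or> small (AA k - B))"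
  have "fam (Suc nmax) (AA(k := B, nmax := AA k - B))"
    unfolding fam_def
  proof (rule conjI; intro allI impI)
    fix j assume j: "j < Suc nmax"
    show "(AA(k := B, nmax := AA k - B)) j \<subseteq> I \<and> \<not> small ((AA(k := B, nmax := AA k - B)) j)"
      using j k B ns AA_sub AA_ns by (cases "j = nmax"; cases "j = k") auto
  next
    fix i j assume i: "i < Suc nmax" and j: "j < Suc nmax" and ij: "i \<noteq> j"
    show "(AA(k := B, nmax := AA k - B)) i \<inter> (AA(k := B, nmax := AA k - B)) j = {}"
      using i j ij k B AA_disj[of i j] AA_disj[of i k] AA_disj[of k j]
      by (cases "i = nmax"; cases "j = nmax"; cases "i = k"; cases "j = k") auto
  qed
  then show False using nmax_ge by fastforce
qed

lemma lim_ex: assumes k: "k < nmax" and x: "x \<in> carrier G"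
  shows "\<exists>s\<in>carrier S. small (AA k - {i. x i = s})"
proof (rule ccontr)
  assume "\<not> (\<exists>s\<in>carrier S. small (AA k - {i. x i = s}))"
  then have ns: "\<And>s. s \<in> carrier S \<Longrightarrow> \<not> small (AA k - {i. x i = s})" by blast
  have sm: "small {i \<in> AA k. x i = s}" if s: "s \<in> carrier S" for s
  proof -
    have "AA k - {i \<in> AA k. x i = s} = AA k - {i. x i = s}" by blast
    then show ?thesis using atom[OF k, of "{i \<in> AA k. x i = s}"] ns[OF s] by auto
  qed
  have "AA k = \<Union> ((\<lambda>s. {i \<in> AA k. x i = s}) ` carrier S)"
    using AA_sub[OF k] x by auto
  moreover have "small (\<Union> ((\<lambda>s. {i \<in> AA k. x i = s}) ` carrier S))"
    by (rule small_UN[OF finS sm])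
  ultimately show False using AA_ns[OF k] by simp
qed

lemma lim_uniq: assumes k: "k < nmax" and s: "s \<in> carrier S" and t: "t \<in> carrier S"
  and ss: "small (AA k - {i. x i = s})" and st: "small (AA k - {i. x i = t})"
  shows "s = t"
proof (rule ccontr)
  assume "s \<noteq> t"
  then have "AA k \<inter> I \<subseteq> (AA k - {i. x i = s}) \<union> (AA k - {i. x i = t})" by blast
  then have "small (AA k)" using small_mono[OF small_Un[OF ss st]] by blast
  then show False using AA_ns[OF k] by simp
qed

definition lim where "lim k x = (THE s. s \<in> carrier S \<and> small (AA k - {i. x i = s}))"

lemma lim_prop: assumes k: "k < nmax" and x: "x \<in> carrier G"
  shows "lim k x \<in> carrier S" "small (AA k - {i. x i = lim k x})"
proof -
  have "\<exists>!s. s \<in> carrier S \<and> small (AA k - {i. x i = s})"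
    using lim_ex[OF k x] lim_uniq[OF k] by blast
  from theI'[OF this] show "lim k x \<in> carrier S" "small (AA k - {i. x i = lim k x})"
    unfolding lim_def by blast+
qed

lemma lim_eq: assumes k: "k < nmax" and x: "x \<in> carrier G" and t: "t \<in> carrier S"
  and st: "small (AA k - {i. x i = t})" shows "lim k x = t"
  using lim_uniq[OF k lim_prop(1)[OF k x] t lim_prop(2)[OF k x] st] .

abbreviation "P \<equiv> product_group {..<nmax} (\<lambda>_. S)"

definition Th where "Th x = (\<lambda>k\<in>{..<nmax}. lim k x)"

lemma grpP: "group P" using grpS by simp

lemma Th_mult: assumes x: "x \<in> carrier G" and y: "y \<in> carrier G" and k: "k < nmax"
  shows "lim k (x \<otimes>\<^bsub>G\<^esub> y) = lim k x \<otimes>\<^bsub>S\<^esub> lim k y"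
proof (rule lim_eq[OF k])
  show "x \<otimes>\<^bsub>G\<^esub> y \<in> carrier G"
    by (rule monoid.m_closed[OF group.is_monoid[OF grpG] x y])
  show "lim k x \<otimes>\<^bsub>S\<^esub> lim k y \<in> carrier S"
    by (rule monoid.m_closed[OF group.is_monoid[OF grpS] lim_prop(1)[OF k x] lim_prop(1)[OF k y]])
  have "AA k - {i. (x \<otimes>\<^bsub>G\<^esub> y) i = lim k x \<otimes>\<^bsub>S\<^esub> lim k y}
      \<subseteq> (AA k - {i. x i = lim k x}) \<union> (AA k - {i. y i = lim k y})"
    using AA_sub[OF k] by auto
  then show "small (AA k - {i. (x \<otimes>\<^bsub>G\<^esub> y) i = lim k x \<otimes>\<^bsub>S\<^esub> lim k y})"
    using small_mono[OF small_Un[OF lim_prop(2)[OF k x] lim_prop(2)[OF k y]]] by blast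
qed

lemma Th_hom: "Th \<in> hom G P"
proof (rule homI)
  fix x assume x: "x \<in> carrier G"
  show "Th x \<in> carrier P" unfolding Th_def using lim_prop(1)[OF _ x] by auto
next
  fix x y assume x: "x \<in> carrier G" and y: "y \<in> carrier G"
  show "Th (x \<otimes>\<^bsub>G\<^esub> y) = Th x \<otimes>\<^bsub>P\<^esub> Th y"
    unfolding Th_def using Th_mult[OF x y] by (auto intro!: restrict_ext)
qed

lemma Th_grouphom: "group_hom G P Th"
  using grpG grpP Th_hom by (simp add: group_hom_def group_hom_axioms_def)

lemma Th_surj: "Th ` carrier G = carrier P"
proof
  show "Th ` carrier G \<subseteq> carrier P" using Th_hom unfolding hom_def by blast
  show "carrier P \<subseteq> Th ` carrier G"
  proof
    fix z assume z: "z \<in> carrier P"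
    define x where "x = (\<lambda>i\<in>I. if \<exists>k<nmax. i \<in> AA k then z (SOME k. k < nmax \<and> i \<in> AA k) else \<one>\<^bsub>S\<^esub>)"
    have xc: "x \<in> carrier G"
    proof -
      have "z (SOME k. k < nmax \<and> i \<in> AA k) \<in> carrier S" if "\<exists>k<nmax. i \<in> AA k" for i
      proof -
        have "(SOME k. k < nmax \<and> i \<in> AA k) < nmax" using someI_ex[OF that] by blast
        then show ?thesis using z by auto
      qed
      then show ?thesis unfolding x_def using oneS by auto
    qed
    have xk: "x i = z k" if k: "k < nmax" and i: "i \<in> AA k" for k i
    proof -
      have iI: "i \<in> I" using AA_sub[OF k] i by blast
      have "(SOME k. k < nmax \<and> i \<in> AA k) = k"
      proof (rule some_equality)
        show "k < nmax \<and> i \<in> AA k" using k i by blast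
        fix j assume "j < nmax \<and> i \<in> AA j" then show "j = k" using AA_disj[of j k] k i by blast
      qed
      then show ?thesis unfolding x_def using iI k i by auto
    qed
    have "Th x = z"
    proof (rule PiE_ext[of _ "{..<nmax}" "\<lambda>_. carrier S"])
      show "Th x \<in> (\<Pi>\<^sub>E k\<in>{..<nmax}. carrier S)" using Th_hom xc unfolding hom_def by auto
      show "z \<in> (\<Pi>\<^sub>E k\<in>{..<nmax}. carrier S)" using z by simp
      fix k assume k: "k \<in> {..<nmax}"
      have eq: "AA k - {i. x i = z k} = {}" using xk k by auto
      have sm: "small (AA k - {i. x i = z k})" by (simp only: eq small_empty)
      have "z k \<in> carrier S" using z k by auto
      then have "lim k x = z k" using lim_eq[OF _ xc _ sm] k by simp
      then show "Th x k = z k" unfolding Th_def using k by simp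
    qed
    then show "z \<in> Th ` carrier G" using xc by blast
  qed
qed

lemma Th_kernel: "kernel G P Th = N"
proof
  show "kernel G P Th \<subseteq> N"
  proof
    fix x assume "x \<in> kernel G P Th"
    then have xc: "x \<in> carrier G" and t1: "Th x = \<one>\<^bsub>P\<^esub>" unfolding kernel_def by auto
    have l1: "lim k x = \<one>\<^bsub>S\<^esub>" if k: "k < nmax" for k
    proof -
      have "Th x k = \<one>\<^bsub>P\<^esub> k" using t1 by simp
      then show ?thesis unfolding Th_def using k by simp
    qed
    have sk: "small (AA k - {i. x i = \<one>\<^bsub>S\<^esub>})" if k: "k \<in> {..<nmax}" for k
      using lim_prop(2)[of k x] l1[of k] k xc by auto
    have "small ((I - \<Union> (AA ` {..<nmax})) \<union> \<Union> ((\<lambda>k. AA k - {i. x i = \<one>\<^bsub>S\<^esub>}) ` {..<nmax}))"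
      by (rule small_Un[OF rest_small small_UN[OF finite_lessThan sk]])
    moreover have "{i\<in>I. x i \<noteq> \<one>\<^bsub>S\<^esub>} \<inter> I \<subseteq> (I - \<Union> (AA ` {..<nmax})) \<union> \<Union> ((\<lambda>k. AA k - {i. x i = \<one>\<^bsub>S\<^esub>}) ` {..<nmax})"
      by blast
    ultimately have "small {i\<in>I. x i \<noteq> \<one>\<^bsub>S\<^esub>}" by (rule small_mono)
    then show "x \<in> N" using supp_small[OF xc] by blast
  qed
  show "N \<subseteq> kernel G P Th"
  proof
    fix x assume xN: "x \<in> N"
    have xc: "x \<in> carrier G" using subgroup.mem_carrier[OF subN xN] .
    have sm: "small {i\<in>I. x i \<noteq> \<one>\<^bsub>S\<^esub>}" using supp_small[OF xc] xN by blast
    have "lim k x = \<one>\<^bsub>S\<^esub>" if k: "k < nmax" for k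
    proof (rule lim_eq[OF k xc oneS])
      show "small (AA k - {i. x i = \<one>\<^bsub>S\<^esub>})" by (rule small_mono[OF sm]) (use AA_sub[OF k] in blast)
    qed
    then have "Th x = \<one>\<^bsub>P\<^esub>" unfolding Th_def by (auto intro!: restrict_ext)
    then show "x \<in> kernel G P Th" unfolding kernel_def using xc by blast
  qed
qed

lemma quot_iso: "G Mod N \<cong> P"
  using group_hom.FactGroup_iso[OF Th_grouphom Th_surj] unfolding Th_kernel .

end



definition tr :: "'a \<Rightarrow> ('i \<Rightarrow> 'a) set set" where "tr a = {{\<lambda>_. a}}"

definition TT :: "('a,'b) monoid_scheme \<Rightarrow> ('i \<Rightarrow> 'a) set set monoid" where
  "TT S = \<lparr>carrier = tr ` carrier S,
           monoid.mult = (\<lambda>u v. tr (inv_into (carrier S) tr u \<otimes>\<^bsub>S\<^esub> inv_into (carrier S) tr v)),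
           one = tr \<one>\<^bsub>S\<^esub>\<rparr>"

lemma tr_inj: "inj tr"
proof (rule injI)
  fix a b :: 'a assume "(tr a :: ('i \<Rightarrow> 'a) set set) = tr b"
  then have "(\<lambda>_::'i. a) = (\<lambda>_. b)" unfolding tr_def by simp
  then show "a = b" by (metis)
qed

lemma tr_hom: assumes "group S" shows "(tr :: 'a \<Rightarrow> ('i \<Rightarrow> 'a) set set) \<in> hom S (TT S)"
proof (rule homI)
  fix x assume "x \<in> carrier S" then show "(tr x :: ('i \<Rightarrow> 'a) set set) \<in> carrier (TT S)" unfolding TT_def by simp
next
  fix x y assume x: "x \<in> carrier S" and y: "y \<in> carrier S"
  have i: "inj_on (tr :: 'a \<Rightarrow> ('i \<Rightarrow> 'a) set set) (carrier S)" using tr_inj by (rule inj_on_subset) simp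
  show "(tr (x \<otimes>\<^bsub>S\<^esub> y) :: ('i \<Rightarrow> 'a) set set) = tr x \<otimes>\<^bsub>TT S\<^esub> tr y"
    unfolding TT_def using inv_into_f_f[OF i x] inv_into_f_f[OF i y] by simp
qed

lemma TT_group: assumes S: "group S" shows "group (TT S :: ('i \<Rightarrow> 'a) set set monoid)"
proof -
  have "group ((TT S :: ('i \<Rightarrow> 'a) set set monoid)\<lparr>carrier := tr ` carrier S, one := tr \<one>\<^bsub>S\<^esub>\<rparr>)"
    using group.hom_imp_img_group[OF S tr_hom[OF S]] .
  moreover have "(TT S :: ('i \<Rightarrow> 'a) set set monoid)\<lparr>carrier := tr ` carrier S, one := tr \<one>\<^bsub>S\<^esub>\<rparr> = TT S"
    unfolding TT_def by simp
  ultimately show ?thesis by simp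
qed

lemma TT_iso: assumes S: "group S" shows "(tr :: 'a \<Rightarrow> ('i \<Rightarrow> 'a) set set) \<in> iso S (TT S)"
  unfolding iso_def bij_betw_def
  using tr_hom[OF S] inj_on_subset[OF tr_inj] by (auto simp: TT_def)

lemma TT_props:
  assumes simple: "simple_group S" and fin: "finite (carrier S)" and nc: "\<not> comm_group S"
  shows "simple_group (TT S :: ('i \<Rightarrow> 'a) set set monoid)" "finite (carrier (TT S :: ('i \<Rightarrow> 'a) set set monoid))"
    "\<not> comm_group (TT S :: ('i \<Rightarrow> 'a) set set monoid)" "S \<cong> (TT S :: ('i \<Rightarrow> 'a) set set monoid)"
proof -
  have S: "group S" using simple simple_group_def by blast
  show iso: "S \<cong> (TT S :: ('i \<Rightarrow> 'a) set set monoid)" using TT_iso[OF S] by (rule is_isoI)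
  show "simple_group (TT S :: ('i \<Rightarrow> 'a) set set monoid)"
    using simple_group.iso_simple[OF simple TT_group[OF S] TT_iso[OF S]] .
  show "finite (carrier (TT S :: ('i \<Rightarrow> 'a) set set monoid))" using fin unfolding TT_def by simp
  show "\<not> comm_group (TT S :: ('i \<Rightarrow> 'a) set set monoid)"
  proof
    assume c: "comm_group (TT S :: ('i \<Rightarrow> 'a) set set monoid)"
    have "(TT S :: ('i \<Rightarrow> 'a) set set monoid) \<cong> S" using group.iso_sym[OF S iso] .
    then have "comm_group S" using comm_group.iso_imp_comm_group[OF c] group.is_monoid[OF S] by blast
    then show False using nc by simp
  qed
qed

theorem mainTheorem9:
  fixes S :: "('a, 'b) monoid_scheme" and I :: "'i set" and N :: "('i \<Rightarrow> 'a) set"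
  assumes "simple_group S"
    and "finite (carrier S)"
    and "\<not> comm_group S"
    and "N \<lhd> product_group I (\<lambda>_. S)"
    and "finite (carrier (product_group I (\<lambda>_. S) Mod N))"
  shows "\<exists>(n::nat) (T :: nat \<Rightarrow> ('i \<Rightarrow> 'a) set set monoid).
           (\<forall>k<n. simple_group (T k) \<and> finite (carrier (T k)) \<and> \<not> comm_group (T k)) \<and>
           product_group {..<n} T \<cong> product_group I (\<lambda>_. S) Mod N"
proof -
  interpret m: msetup2 S I N using assms by (simp add: msetup2_def msetup_def msetup2_axioms_def)
  have S: "group S" using m.grpS .
  let ?T = "\<lambda>_::nat. (TT S :: ('i \<Rightarrow> 'a) set set monoid)"
  have Q: "group (product_group I (\<lambda>_. S) Mod N)" using normal.factorgroup_is_group[OF assms(4)] .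
  have "product_group {..<m.nmax} (\<lambda>_. S) \<cong> product_group {..<m.nmax} ?T"
    by (rule iso_product_groupI) (use TT_props[OF assms(1-3)] TT_group[OF S] S in auto)
  then have "product_group {..<m.nmax} ?T \<cong> product_group {..<m.nmax} (\<lambda>_. S)"
    using group.iso_sym[OF m.grpP] by blast
  moreover have "product_group {..<m.nmax} (\<lambda>_. S) \<cong> product_group I (\<lambda>_. S) Mod N"
    using group.iso_sym[OF Q m.quot_iso] .
  ultimately have "product_group {..<m.nmax} ?T \<cong> product_group I (\<lambda>_. S) Mod N"
    by (rule iso_trans)
  moreover have "\<forall>k<m.nmax. simple_group (?T k) \<and> finite (carrier (?T k)) \<and> \<not> comm_group (?T k)"
    using TT_props[OF assms(1-3)] by blast
  ultimately show ?thesis by (intro exI[of _ m.nmax] exI[of _ ?T]) simp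
qed


end
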